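(* Let $\lambda>0$, $\ell>0$, let $\gamma$ be one of $\gamma_{\rm sarc}^{\lambda,\ell,1}$, $\gamma_{\rm larc}^{\lambda,\ell,1}$ (these two when $\lambda\ell^2\le\hat\lambda$), or $\gamma_{\rm loop}^{\lambda,\ell,1}$, and let $L:=L[\gamma]$. Writing $\gamma=(X,Y)$, one has $X(s)+X(L-s)=\ell$ and $Y(s)=Y(L-s)$ for all $s\in[0,L]$. In addition, if $\gamma=\gamma_{\rm loop}^{\lambda,\ell,1}$, then $\gamma$ has a self-intersection: there is $s\in(0,L/2)$ with $\gamma(s)=\gamma(L-s)$.
   Context: Elliptic functions: for $q\in[0,1)$, $x\in\mathbb{R}$, $\mathrm{F}(x,q)=\int_0^x(1-q^2\sin^2\theta)^{-1/2}\,d\theta$, $\mathrm{E}(x,q)=\int_0^x(1-q^2\sin^2\theta)^{1/2}\,d\theta$, $\mathrm{K}(q)=\mathrm{F}(\pi/2,q)$, $\mathrm{E}(q)=\mathrm{E}(\pi/2,q)$; $\mathrm{am}(\cdot,q)$ is the inverse of $x\mapsto\mathrm{F}(x,q)$, $\mathrm{cn}(x,q)=\cos\mathrm{am}(x,q)$. The function $q\mapsto2\mathrm{E}(q)-\mathrm{K}(q)$ is strictly decreasing on $[0,1)$ with unique zero $q_*\in(0,1)$. On $[1/\sqrt2,1)$ let $f(q)=(4q^4-5q^2+1)\mathrm{K}(q)+(-8q^4+8q^2-1)\mathrm{E}(q)$ and $g(q)=8(2\mathrm{E}(q)-\mathrm{K}(q))^2(2q^2-1)$. $f$ has a unique zero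 $\hat q\in[1/\sqrt2,1)$; $\hat\lambda:=g(\hat q)\approx0.70107$. $g(1/\sqrt2)=0$, $g$ is strictly increasing on $[1/\sqrt2,\hat q]$, strictly decreasing on $[\hat q,q_*]$ with $g(q_* )=0$, strictly increasing on $[q_*,1)$ with $g\to\infty$ at $1$. For $c\in(0,\hat\lambda]$ let $q_1(c)\in(1/\sqrt2,\hat q]$, $q_2(c)\in[\hat q,q_* )$ solve $g(q)=c$; for $c>0$ let $q_3(c)\in(q_*,1)$ solve $g(q)=c$. Curves (arclength parametrized on $[0,2\mathrm{K}(q)/\alpha]$, so $L=2\mathrm{K}(q)/\alpha$): $\gamma_{\rm sarc}^{\lambda,\ell,1}(s)=\frac1\alpha\big(2\mathrm{E}(\mathrm{am}(\alpha s-\mathrm{K}(q),q),q)+2\mathrm{E}(q)-\alpha s,\ 2q\,\mathrm{cn}(\alpha s-\mathrm{K}(q),q)\big)$ with $q=q_1(\lambda\ell^2)$, $\alpha=\frac{2}{\ell}(2\mathrm{E}(q)-\mathrm{K}(q))$; $\gamma_{\rm larc}^{\lambda,\ell,1}$ is the same formula with $q=q_2(\lambda\ell^2)$; $\gamma_{\rm loop}^{\lambda,\ell,1}(s)=\frac1\alpha\big(-2\mathrm{E}(\mathrm{am}(\alpha s-\mathrm{K}(q),q),q)-2\mathrm{E}(q)+\alpha s,\ 2q\,\mathrm{cn}(\alpha s-\mathrm{K}(q),q)\big)$ with $q=q_3(\lambda\ell^2)$, $\alpha=\frac{2}{\ell}(\mathrm{K}(q)-2\mathrm{E}(q))$. 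*)

theory Defs
  imports "HOL-Analysis.Analysis"
begin

text \<open>Signed integral from 0 to x (so that F and E are defined for all real x).\<close>
definition sint0 :: "(real \<Rightarrow> real) \<Rightarrow> real \<Rightarrow> real" where
  "sint0 h x = (if 0 \<le> x then integral {0..x} h else - integral {x..0} h)"

definition ellF :: "real \<Rightarrow> real \<Rightarrow> real" where
  "ellF x q = sint0 (\<lambda>\<theta>. 1 / sqrt (1 - q\<^sup>2 * (sin \<theta>)\<^sup>2)) x"

definition ellE :: "real \<Rightarrow> real \<Rightarrow> real" where
  "ellE x q = sint0 (\<lambda>\<theta>. sqrt (1 - q\<^sup>2 * (sin \<theta>)\<^sup>2)) x"

definition ellK :: "real \<Rightarrow> real" where
  "ellK q = ellF (pi / 2) q"

definition ellEc :: "real \<Rightarrow> real" where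
  "ellEc q = ellE (pi / 2) q"

definition am :: "real \<Rightarrow> real \<Rightarrow> real" where
  "am u q = (THE x. ellF x q = u)"

definition cn :: "real \<Rightarrow> real \<Rightarrow> real" where
  "cn u q = cos (am u q)"

definition q_star :: real where
  "q_star = (THE q. 0 \<le> q \<and> q < 1 \<and> 2 * ellEc q - ellK q = 0)"

definition f_aux :: "real \<Rightarrow> real" where
  "f_aux q = (4*q^4 - 5*q\<^sup>2 + 1) * ellK q + (-8*q^4 + 8*q\<^sup>2 - 1) * ellEc q"

definition g_aux :: "real \<Rightarrow> real" where
  "g_aux q = 8 * (2 * ellEc q - ellK q)\<^sup>2 * (2*q\<^sup>2 - 1)"

definition q_hat :: real where
  "q_hat = (THE q. 1 / sqrt 2 \<le> q \<and> q < 1 \<and> f_aux q = 0)"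

definition lambda_hat :: real where
  "lambda_hat = g_aux q_hat"

definition q1 :: "real \<Rightarrow> real" where
  "q1 c = (THE q. 1 / sqrt 2 < q \<and> q \<le> q_hat \<and> g_aux q = c)"

definition q2 :: "real \<Rightarrow> real" where
  "q2 c = (THE q. q_hat \<le> q \<and> q < q_star \<and> g_aux q = c)"

definition q3 :: "real \<Rightarrow> real" where
  "q3 c = (THE q. q_star < q \<and> q < 1 \<and> g_aux q = c)"

definition alpha_arc :: "real \<Rightarrow> real \<Rightarrow> real" where
  "alpha_arc q l = 2 / l * (2 * ellEc q - ellK q)"

definition gamma_arc :: "real \<Rightarrow> real \<Rightarrow> real \<Rightarrow> real \<times> real" where
  "gamma_arc q l s = (let a = alpha_arc q l in
     ((2 * ellE (am (a * s - ellK q) q) q + 2 * ellEc q - a * s) / a,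
      (2 * q * cn (a * s - ellK q) q) / a))"

definition alpha_loop :: "real \<Rightarrow> real \<Rightarrow> real" where
  "alpha_loop q l = 2 / l * (ellK q - 2 * ellEc q)"

definition gamma_loop0 :: "real \<Rightarrow> real \<Rightarrow> real \<Rightarrow> real \<times> real" where
  "gamma_loop0 q l s = (let a = alpha_loop q l in
     ((- 2 * ellE (am (a * s - ellK q) q) q - 2 * ellEc q + a * s) / a,
      (2 * q * cn (a * s - ellK q) q) / a))"

definition gamma_sarc :: "real \<Rightarrow> real \<Rightarrow> real \<Rightarrow> real \<times> real" where
  "gamma_sarc lam l = gamma_arc (q1 (lam * l\<^sup>2)) l"

definition gamma_larc :: "real \<Rightarrow> real \<Rightarrow> real \<Rightarrow> real \<times> real" where
  "gamma_larc lam l = gamma_arc (q2 (lam * l\<^sup>2)) l"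

definition gamma_loop :: "real \<Rightarrow> real \<Rightarrow> real \<Rightarrow> real \<times> real" where
  "gamma_loop lam l = gamma_loop0 (q3 (lam * l\<^sup>2)) l"

definition L_sarc :: "real \<Rightarrow> real \<Rightarrow> real" where
  "L_sarc lam l = (let q = q1 (lam * l\<^sup>2) in 2 * ellK q / alpha_arc q l)"

definition L_larc :: "real \<Rightarrow> real \<Rightarrow> real" where
  "L_larc lam l = (let q = q2 (lam * l\<^sup>2) in 2 * ellK q / alpha_arc q l)"

definition L_loop :: "real \<Rightarrow> real \<Rightarrow> real" where
  "L_loop lam l = (let q = q3 (lam * l\<^sup>2) in 2 * ellK q / alpha_loop q l)"

definition sym_curve :: "(real \<Rightarrow> real \<times> real) \<Rightarrow> real \<Rightarrow> real \<Rightarrow> bool" where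
  "sym_curve \<gamma> L l \<longleftrightarrow> (\<forall>s\<in>{0..L}. fst (\<gamma> s) + fst (\<gamma> (L - s)) = l \<and> snd (\<gamma> s) = snd (\<gamma> (L - s)))"

end

theory Submission
  imports Defs
begin


lemma sint0_split:
  assumes h: "continuous_on UNIV h" and a: "a \<le> min y 0"
  shows "sint0 h y = integral {a..y} h - integral {a..0} h"
proof (cases "0 \<le> y")
  case True
  have "integral {a..0} h + integral {0..y} h = integral {a..y} h"
    apply (rule Henstock_Kurzweil_Integration.integral_combine[where a=a and c=0 and b=y and f=h]) using a True by (auto intro!: integrable_continuous_real continuous_on_subset[OF h])
  then show ?thesis using True by (simp add: sint0_def)
next
  case False
  have "integral {a..y} h + integral {y..0} h = integral {a..0} h"
    apply (rule Henstock_Kurzweil_Integration.integral_combine[where a=a and c=y and b=0 and f=h]) using a False by (auto intro!: integrable_continuous_real continuous_on_subset[OF h])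
  then show ?thesis using False by (simp add: sint0_def)
qed

lemma sint0_deriv:
  assumes h: "continuous_on UNIV h"
  shows "(sint0 h has_real_derivative h x) (at x)"
proof -
  define a where "a = - \<bar>x\<bar> - 1"
  define b where "b = \<bar>x\<bar> + 1"
  have d: "((\<lambda>y. integral {a..y} h - integral {a..0} h) has_real_derivative h x) (at x within {a..b})"
  proof -
    have "((\<lambda>y. integral {a..y} h) has_real_derivative h x) (at x within {a..b})"
      by (rule integral_has_real_derivative[of a b h x]) (auto intro: continuous_on_subset[OF h] simp: a_def b_def)
    then show ?thesis by (rule derivative_eq_intros) auto
  qed
  have "at x within {a..b} = at x" by (rule at_within_Icc_at) (auto simp: a_def b_def)
  with d have d2: "((\<lambda>y. integral {a..y} h - integral {a..0} h) has_real_derivative h x) (at x)" by simp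
  show ?thesis
    apply (rule has_field_derivative_transform_within_open[OF d2, where S="{a<..<b}"])
    using sint0_split[OF h, of a] by (auto simp: a_def b_def)
qed

lemma sint0_0: "sint0 h 0 = 0" by (simp add: sint0_def)

definition kf :: "real \<Rightarrow> real \<Rightarrow> real" where
  "kf q t = 1 / sqrt (1 - q\<^sup>2 * (sin t)\<^sup>2)"
definition ef :: "real \<Rightarrow> real \<Rightarrow> real" where
  "ef q t = sqrt (1 - q\<^sup>2 * (sin t)\<^sup>2)"

lemma ellF_sint0: "ellF x q = sint0 (kf q) x"
  by (simp add: ellF_def kf_def[abs_def])
lemma ellE_sint0: "ellE x q = sint0 (ef q) x"
  by (simp add: ellE_def ef_def[abs_def])

lemma D_pos: fixes q t :: real assumes "q\<^sup>2 < 1" shows "0 < 1 - q\<^sup>2 * (sin t)\<^sup>2"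
proof -
  have "(sin t)\<^sup>2 \<le> 1" using sin_cos_squared_add[of t] zero_le_power2[of "cos t"] by linarith
  then have "q\<^sup>2 * (sin t)\<^sup>2 \<le> q\<^sup>2" by (simp add: mult_left_le)
  then show ?thesis using assms by linarith
qed

lemma kf_pos: assumes "q\<^sup>2 < 1" shows "0 < kf q t"
  unfolding kf_def using D_pos[OF assms, of t] by (intro divide_pos_pos real_sqrt_gt_zero) auto
lemma ef_pos: assumes "q\<^sup>2 < 1" shows "0 < ef q t"
  unfolding ef_def using D_pos[OF assms, of t] by (intro real_sqrt_gt_zero) auto
lemma kf_ge1: "q\<^sup>2 < 1 \<Longrightarrow> 1 \<le> kf q t"
proof -
  assume q: "q\<^sup>2 < 1"
  have "0 < 1 - q\<^sup>2 * (sin t)\<^sup>2" using D_pos[OF q] .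
  moreover have "1 - q\<^sup>2 * (sin t)\<^sup>2 \<le> 1" by simp
  ultimately have "sqrt (1 - q\<^sup>2 * (sin t)\<^sup>2) \<le> 1" "0 < sqrt (1 - q\<^sup>2 * (sin t)\<^sup>2)" by auto
  then show ?thesis by (simp add: kf_def)
qed
lemma kf_even: "kf q (-t) = kf q t" by (simp add: kf_def)
lemma ef_even: "ef q (-t) = ef q t" by (simp add: ef_def)

lemma kf_cont: assumes q: "q\<^sup>2 < 1" shows "continuous_on UNIV (kf q)"
proof -
  have "\<And>t. sqrt (1 - q\<^sup>2 * (sin t)\<^sup>2) \<noteq> 0" using D_pos[OF q] by (metis less_irrefl real_sqrt_eq_zero_cancel_iff)
  then show ?thesis unfolding kf_def[abs_def] by (auto intro!: continuous_intros)
qed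
lemma ef_cont: "q\<^sup>2 < 1 \<Longrightarrow> continuous_on UNIV (ef q)"
  unfolding ef_def[abs_def] by (auto intro!: continuous_intros)

lemma ellF_deriv: "q\<^sup>2 < 1 \<Longrightarrow> ((\<lambda>x. ellF x q) has_real_derivative kf q x) (at x)"
  unfolding ellF_sint0 by (rule sint0_deriv[OF kf_cont])
lemma ellE_deriv: "q\<^sup>2 < 1 \<Longrightarrow> ((\<lambda>x. ellE x q) has_real_derivative ef q x) (at x)"
  unfolding ellE_sint0 by (rule sint0_deriv[OF ef_cont])

lemma ellF_0[simp]: "ellF 0 q = 0" by (simp add: ellF_sint0 sint0_0)
lemma ellE_0[simp]: "ellE 0 q = 0" by (simp add: ellE_sint0 sint0_0)

lemma ellF_odd: assumes q: "q\<^sup>2 < 1" shows "ellF (-x) q = - ellF x q"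
proof -
  have "\<forall>y. ((\<lambda>x. ellF x q + ellF (-x) q) has_real_derivative 0) (at y)"
  proof
    fix y
    have d2: "((\<lambda>x. ellF (-x) q) has_real_derivative kf q (-y) * (-1)) (at y)"
      by (rule DERIV_chain2[OF ellF_deriv[OF q]]) (auto intro!: derivative_eq_intros)
    have "((\<lambda>x. ellF x q + ellF (-x) q) has_real_derivative kf q y + kf q (-y) * (-1)) (at y)"
      by (rule DERIV_add[OF ellF_deriv[OF q] d2])
    then show "((\<lambda>x. ellF x q + ellF (-x) q) has_real_derivative 0) (at y)" by (simp add: kf_even)
  qed
  from DERIV_isconst_all[OF this, of x 0] show ?thesis by simp
qed

lemma ellE_odd: assumes q: "q\<^sup>2 < 1" shows "ellE (-x) q = - ellE x q"
proof -
  have "\<forall>y. ((\<lambda>x. ellE x q + ellE (-x) q) has_real_derivative 0) (at y)"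
  proof
    fix y
    have d2: "((\<lambda>x. ellE (-x) q) has_real_derivative ef q (-y) * (-1)) (at y)"
      by (rule DERIV_chain2[OF ellE_deriv[OF q]]) (auto intro!: derivative_eq_intros)
    have "((\<lambda>x. ellE x q + ellE (-x) q) has_real_derivative ef q y + ef q (-y) * (-1)) (at y)"
      by (rule DERIV_add[OF ellE_deriv[OF q] d2])
    then show "((\<lambda>x. ellE x q + ellE (-x) q) has_real_derivative 0) (at y)" by (simp add: ef_even)
  qed
  from DERIV_isconst_all[OF this, of x 0] show ?thesis by simp
qed

lemma ellF_strict: assumes q: "q\<^sup>2 < 1" and "x < y" shows "ellF x q < ellF y q"
  by (rule DERIV_pos_imp_increasing[OF assms(2)]) (use ellF_deriv[OF q] kf_pos[OF q] in blast)

lemma ellF_inj: assumes q: "q\<^sup>2 < 1" shows "ellF x q = ellF y q \<longleftrightarrow> x = y"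
  using ellF_strict[OF q, of x y] ellF_strict[OF q, of y x] by (cases x y rule: linorder_cases) auto

lemma ellF_ge: assumes q: "q\<^sup>2 < 1" and "0 \<le> x" shows "x \<le> ellF x q"
proof -
  have "(\<lambda>x. ellF x q - x) 0 \<le> (\<lambda>x. ellF x q - x) x"
  proof (rule DERIV_nonneg_imp_nondecreasing[OF assms(2)])
    fix t show "\<exists>y. ((\<lambda>x. ellF x q - x) has_real_derivative y) (at t) \<and> 0 \<le> y"
      using ellF_deriv[OF q, of t, THEN DERIV_diff, OF DERIV_ident] kf_ge1[OF q, of t] by force
  qed
  then show ?thesis by simp
qed

lemma ellF_cont: "q\<^sup>2 < 1 \<Longrightarrow> continuous_on S (\<lambda>x. ellF x q)"
  using ellF_deriv by (meson DERIV_isCont continuous_at_imp_continuous_on)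

lemma ellF_surj: assumes q: "q\<^sup>2 < 1" shows "\<exists>x. ellF x q = u"
proof -
  have "\<exists>x. ellF x q = u" if u: "0 \<le> u" for u
  proof -
    have "\<exists>x\<ge>0. x \<le> u \<and> ellF x q = u"
      by (rule IVT) (use u ellF_ge[OF q u] DERIV_isCont[OF ellF_deriv[OF q]] in auto)
    then show ?thesis by blast
  qed
  moreover have "\<exists>x. ellF x q = u" if u: "u < 0"
  proof -
    obtain x where "ellF x q = -u" using \<open>\<And>u. 0 \<le> u \<Longrightarrow> _\<close>[of "-u"] u by auto
    then have "ellF (-x) q = u" by (simp add: ellF_odd[OF q])
    then show ?thesis by blast
  qed
  ultimately show ?thesis by force
qed

lemma am_F: assumes q: "q\<^sup>2 < 1" shows "am (ellF x q) q = x"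
  unfolding am_def by (rule the_equality) (auto simp: ellF_inj[OF q])

lemma F_am: assumes q: "q\<^sup>2 < 1" shows "ellF (am u q) q = u"
  using ellF_surj[OF q, of u] am_F[OF q] by auto

lemma am_odd: assumes q: "q\<^sup>2 < 1" shows "am (-u) q = - am u q"
proof -
  obtain x where x: "ellF x q = u" using ellF_surj[OF q] by blast
  have "am (-u) q = am (ellF (-x) q) q" using x by (simp add: ellF_odd[OF q])
  also have "\<dots> = -x" by (rule am_F[OF q])
  finally show ?thesis using x am_F[OF q, of x] by simp
qed

lemma cn_even: assumes q: "q\<^sup>2 < 1" shows "cn (-u) q = cn u q"
  by (simp add: cn_def am_odd[OF q])

lemma arc_sym:
  assumes q: "q\<^sup>2 < 1" and l: "l > 0" and h: "2 * ellEc q - ellK q \<noteq> 0"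
  shows "sym_curve (gamma_arc q l) (2 * ellK q / alpha_arc q l) l"
  unfolding sym_curve_def
proof (intro ballI conjI)
  fix s
  define a where "a = alpha_arc q l"
  have a0: "a \<noteq> 0" using h l by (simp add: a_def alpha_arc_def)
  have al: "l = 2 * (2 * ellEc q - ellK q) / a" using l a0 by (simp add: a_def alpha_arc_def)
  have u: "a * (2 * ellK q / a - s) - ellK q = - (a * s - ellK q)" using a0 by (simp add: algebra_simps)
  have e1: "fst (gamma_arc q l s) = (2 * ellE (am (a * s - ellK q) q) q + 2 * ellEc q - a * s) / a"
    by (simp add: gamma_arc_def Let_def a_def)
  have e2: "fst (gamma_arc q l (2 * ellK q / alpha_arc q l - s)) = (2 * ellE (am (- (a * s - ellK q)) q) q + 2 * ellEc q - a * (2 * ellK q / a - s)) / a"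
    unfolding gamma_arc_def Let_def a_def[symmetric] fst_conv u ..
  have hl: "2 * ellEc q - ellK q \<noteq> 0" using h by simp
  show "fst (gamma_arc q l s) + fst (gamma_arc q l (2 * ellK q / alpha_arc q l - s)) = l"
  proof -
    have "2 * (2 * ellEc q - ellK q) / a = l" using l hl by (simp add: a_def alpha_arc_def field_simps)
    moreover have "(2 * ellE (am (a * s - ellK q) q) q + 2 * ellEc q - a * s) / a + (2 * ellE (am (- (a * s - ellK q)) q) q + 2 * ellEc q - a * (2 * ellK q / a - s)) / a = 2 * (2 * ellEc q - ellK q) / a"
      unfolding am_odd[OF q] ellE_odd[OF q] using a0 by (simp add: field_simps)
    ultimately show ?thesis unfolding e1 e2 by simp
  qed
  show "snd (gamma_arc q l s) = snd (gamma_arc q l (2 * ellK q / alpha_arc q l - s))"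
    unfolding gamma_arc_def Let_def a_def[symmetric] snd_conv u cn_even[OF q] ..
qed

lemma loop_sym:
  assumes q: "q\<^sup>2 < 1" and l: "l > 0" and h: "2 * ellEc q - ellK q \<noteq> 0"
  shows "sym_curve (gamma_loop0 q l) (2 * ellK q / alpha_loop q l) l"
  unfolding sym_curve_def
proof (intro ballI conjI)
  fix s
  define a where "a = alpha_loop q l"
  have a0: "a \<noteq> 0" using h l by (simp add: a_def alpha_loop_def)
  have al: "l = 2 * (ellK q - 2 * ellEc q) / a" using l a0 by (simp add: a_def alpha_loop_def)
  have u: "a * (2 * ellK q / a - s) - ellK q = - (a * s - ellK q)" using a0 by (simp add: algebra_simps)
  have e1: "fst (gamma_loop0 q l s) = (- 2 * ellE (am (a * s - ellK q) q) q - 2 * ellEc q + a * s) / a"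
    by (simp add: gamma_loop0_def Let_def a_def)
  have e2: "fst (gamma_loop0 q l (2 * ellK q / alpha_loop q l - s)) = (- 2 * ellE (am (- (a * s - ellK q)) q) q - 2 * ellEc q + a * (2 * ellK q / a - s)) / a"
    unfolding gamma_loop0_def Let_def a_def[symmetric] fst_conv u ..
  have hl: "ellK q - 2 * ellEc q \<noteq> 0" using h by simp
  show "fst (gamma_loop0 q l s) + fst (gamma_loop0 q l (2 * ellK q / alpha_loop q l - s)) = l"
  proof -
    have "2 * (ellK q - 2 * ellEc q) / a = l" using l hl by (simp add: a_def alpha_loop_def field_simps)
    moreover have "(- 2 * ellE (am (a * s - ellK q) q) q - 2 * ellEc q + a * s) / a + (- 2 * ellE (am (- (a * s - ellK q)) q) q - 2 * ellEc q + a * (2 * ellK q / a - s)) / a = 2 * (ellK q - 2 * ellEc q) / a"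
      unfolding am_odd[OF q] ellE_odd[OF q] using a0 by (simp add: field_simps)
    ultimately show ?thesis unfolding e1 e2 by simp
  qed
  show "snd (gamma_loop0 q l s) = snd (gamma_loop0 q l (2 * ellK q / alpha_loop q l - s))"
    unfolding gamma_loop0_def Let_def a_def[symmetric] snd_conv u cn_even[OF q] ..
qed

lemma kf_0[simp]: "kf q 0 = 1" by (simp add: kf_def)
lemma ef_0[simp]: "ef q 0 = 1" by (simp add: ef_def)

lemma loop_self:
  assumes q: "q\<^sup>2 < 1" and l: "l > 0" and hK: "2 * ellEc q < ellK q"
  shows "\<exists>s. 0 < s \<and> s < (2 * ellK q / alpha_loop q l) / 2 \<and>
     gamma_loop0 q l s = gamma_loop0 q l (2 * ellK q / alpha_loop q l - s)"
proof -
  define H where "H x = ellF x q - 2 * ellE x q" for x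
  define a where "a = alpha_loop q l"
  have a0: "a > 0" using hK l by (simp add: a_def alpha_loop_def)
  have dH: "(H has_real_derivative kf q x - 2 * ef q x) (at x)" for x
    unfolding H_def[abs_def] using ellF_deriv[OF q, of x] ellE_deriv[OF q, of x]
    by (intro derivative_eq_intros) auto
  have cH: "isCont H x" for x using dH by (rule DERIV_isCont)
  have "kf q 0 - 2 * ef q 0 < 0" by simp
  from DERIV_neg_dec_left[OF dH this] obtain d where d: "d > 0" "\<And>h. h > 0 \<Longrightarrow> h < d \<Longrightarrow> H 0 < H (0 - h)"
    by blast
  define h0 where "h0 = min (d/2) 1"
  have h0: "h0 > 0" "h0 < d" "h0 < pi/2" using d pi_gt3 by (auto simp: h0_def)
  have Hh0: "0 < H (- h0)" using d(2)[OF h0(1,2)] by (simp add: H_def)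
  have FK: "ellF (pi/2) q = ellK q" by (simp add: ellK_def)
  have EK: "ellE (pi/2) q = ellEc q" by (simp add: ellEc_def)
  have Hpi: "H (- (pi/2)) < 0"
    using hK by (simp add: H_def ellF_odd[OF q] ellE_odd[OF q] FK EK)
  obtain phi where phi: "- (pi/2) \<le> phi" "phi \<le> - h0" "H phi = 0"
    using IVT[of H "- (pi/2)" 0 "- h0"] Hpi Hh0 h0 cH by force
  have phi1: "- (pi/2) < phi" using phi Hpi by (cases "phi = - (pi/2)") auto
  have Fphi: "ellF phi q = 2 * ellE phi q" using phi(3) by (simp add: H_def)
  have Fl: "- ellK q < ellF phi q"
    using ellF_strict[OF q phi1] by (simp add: ellF_odd[OF q] FK)
  have Fu: "ellF phi q < 0" using ellF_strict[OF q, of phi 0] phi(2) h0 by simp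
  define s where "s = (ellF phi q + ellK q) / a"
  have as: "a * s - ellK q = ellF phi q" using a0 by (simp add: s_def)
  have as2: "a * (2 * ellK q / a - s) - ellK q = ellF (- phi) q"
    using a0 by (simp add: s_def ellF_odd[OF q] field_simps)
  show ?thesis
  proof (intro exI conjI)
    show "0 < s" using Fl a0 by (simp add: s_def)
    show "s < (2 * ellK q / alpha_loop q l) / 2" using Fu a0
      by (simp add: s_def a_def[symmetric] divide_strict_right_mono)
    show "gamma_loop0 q l s = gamma_loop0 q l (2 * ellK q / alpha_loop q l - s)"
      unfolding gamma_loop0_def Let_def a_def[symmetric] as as2 am_F[OF q] cn_def
      using a0 Fphi by (simp add: ellE_odd[OF q] s_def field_simps)
  qed
qed



lemma ellK_int: "ellK q = integral {0..pi/2} (kf q)"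
  by (simp add: ellK_def ellF_sint0 sint0_def)
lemma ellEc_int: "ellEc q = integral {0..pi/2} (ef q)"
  by (simp add: ellEc_def ellE_sint0 sint0_def)

definition dkf :: "real \<Rightarrow> real \<Rightarrow> real" where
  "dkf q t = q * (sin t)\<^sup>2 / ((1 - q\<^sup>2 * (sin t)\<^sup>2) * sqrt (1 - q\<^sup>2 * (sin t)\<^sup>2))"
definition def :: "real \<Rightarrow> real \<Rightarrow> real" where
  "def q t = - q * (sin t)\<^sup>2 / sqrt (1 - q\<^sup>2 * (sin t)\<^sup>2)"

lemma U_sq': "-1 < x \<Longrightarrow> x < (1::real) \<Longrightarrow> x\<^sup>2 < 1"
  by (simp add: abs_square_less_1 abs_less_iff)
lemma U_sq: "x \<in> {-1<..<1::real} \<Longrightarrow> x\<^sup>2 < 1"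
  by (simp add: abs_square_less_1 abs_less_iff)

lemma sqrtD_dq: assumes "x\<^sup>2 < 1"
  shows "((\<lambda>x. sqrt (1 - x\<^sup>2 * (sin t)\<^sup>2)) has_real_derivative
     inverse (sqrt (1 - x\<^sup>2 * (sin t)\<^sup>2)) / 2 * (- (2 * x * (sin t)\<^sup>2))) (at x)"
proof -
  have D: "0 < 1 - x\<^sup>2 * (sin t)\<^sup>2" using D_pos[OF assms] .
  have dg: "((\<lambda>x. 1 - x\<^sup>2 * (sin t)\<^sup>2) has_real_derivative - (2 * x * (sin t)\<^sup>2)) (at x)"
    by (auto intro!: derivative_eq_intros)
  show ?thesis by (rule DERIV_chain2[OF DERIV_real_sqrt[OF D] dg])
qed

lemma kf_dq: assumes "x\<^sup>2 < 1"
  shows "((\<lambda>x. kf x t) has_real_derivative dkf x t) (at x)"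
proof -
  have D: "0 < 1 - x\<^sup>2 * (sin t)\<^sup>2" using D_pos[OF assms] .
  have "((\<lambda>x. 1 / sqrt (1 - x\<^sup>2 * (sin t)\<^sup>2)) has_real_derivative
     (0 * sqrt (1 - x\<^sup>2 * (sin t)\<^sup>2) - 1 * (inverse (sqrt (1 - x\<^sup>2 * (sin t)\<^sup>2)) / 2 * (- (2 * x * (sin t)\<^sup>2))))
      / (sqrt (1 - x\<^sup>2 * (sin t)\<^sup>2) * sqrt (1 - x\<^sup>2 * (sin t)\<^sup>2))) (at x)"
    by (rule DERIV_divide[OF DERIV_const sqrtD_dq[OF assms]]) (use D in simp)
  then show ?thesis unfolding kf_def[abs_def] dkf_def
    by (rule DERIV_cong) (use D in \<open>simp add: field_simps\<close>)
qed

lemma ef_dq: assumes "x\<^sup>2 < 1"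
  shows "((\<lambda>x. ef x t) has_real_derivative def x t) (at x)"
proof -
  have D: "0 < 1 - x\<^sup>2 * (sin t)\<^sup>2" using D_pos[OF assms] .
  show ?thesis unfolding ef_def[abs_def] def_def
    by (rule DERIV_cong[OF sqrtD_dq[OF assms]]) (use D in \<open>simp add: field_simps\<close>)
qed

lemma dkf_cont: "continuous_on ({-1<..<1} \<times> S) (\<lambda>(x, t). dkf x t)"
proof -
  have "\<And>a b. a \<in> {-1<..<1::real} \<Longrightarrow> 0 < 1 - a\<^sup>2 * (sin b)\<^sup>2" using D_pos U_sq by blast
  then show ?thesis unfolding dkf_def split_beta
    by (auto intro!: continuous_intros simp: less_imp_neq[symmetric])
qed

lemma def_cont: "continuous_on ({-1<..<1} \<times> S) (\<lambda>(x, t). def x t)"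
proof -
  have "\<And>a b. a \<in> {-1<..<1::real} \<Longrightarrow> 0 < 1 - a\<^sup>2 * (sin b)\<^sup>2" using D_pos U_sq by blast
  then show ?thesis unfolding def_def split_beta
    by (auto intro!: continuous_intros simp: less_imp_neq[symmetric])
qed

lemma K_deriv_int: assumes x: "x \<in> {-1<..<1}"
  shows "(ellK has_real_derivative integral {0..pi/2} (dkf x)) (at x)"
proof -
  have "((\<lambda>x. integral (cbox 0 (pi/2)) (kf x)) has_field_derivative integral (cbox 0 (pi/2)) (dkf x)) (at x within {-1<..<1})"
  proof (rule leibniz_rule_field_derivative[where U="{-1<..<1}" and f=kf and fx=dkf])
    fix y t assume y: "y \<in> {-1<..<1::real}"
    show "((\<lambda>x. kf x t) has_field_derivative dkf y t) (at y within {-1<..<1})"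
      using kf_dq[OF U_sq[OF y]] by (rule DERIV_subset) simp
  next
    fix y assume y: "y \<in> {-1<..<1::real}"
    show "kf y integrable_on cbox 0 (pi/2)"
      using kf_cont[OF U_sq[OF y]] by (simp add: integrable_continuous_real continuous_on_subset)
  next
    show "continuous_on ({-1<..<1} \<times> cbox 0 (pi/2)) (\<lambda>(x, t). dkf x t)" by (rule dkf_cont)
  next
    show "x \<in> {-1<..<1}" by (rule x)
  next
    show "convex {-1<..<1::real}" by (rule convex_real_interval(8))
  qed
  then have "((\<lambda>x. integral {0..pi/2} (kf x)) has_field_derivative integral {0..pi/2} (dkf x)) (at x)"
    using x by (simp add: at_within_open[of x "{-1<..<1}"])
  moreover have "ellK = (\<lambda>x. integral {0..pi/2} (kf x))" by (rule ext) (rule ellK_int)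
  ultimately show ?thesis by simp
qed
lemma E_deriv_int: assumes x: "x \<in> {-1<..<1}"
  shows "(ellEc has_real_derivative integral {0..pi/2} (def x)) (at x)"
proof -
  have "((\<lambda>x. integral (cbox 0 (pi/2)) (ef x)) has_field_derivative integral (cbox 0 (pi/2)) (def x)) (at x within {-1<..<1})"
  proof (rule leibniz_rule_field_derivative[where U="{-1<..<1}" and f=ef and fx=def])
    fix y t assume y: "y \<in> {-1<..<1::real}"
    show "((\<lambda>x. ef x t) has_field_derivative def y t) (at y within {-1<..<1})"
      using ef_dq[OF U_sq[OF y]] by (rule DERIV_subset) simp
  next
    fix y assume y: "y \<in> {-1<..<1::real}"
    show "ef y integrable_on cbox 0 (pi/2)"
      using ef_cont[OF U_sq[OF y]] by (simp add: integrable_continuous_real continuous_on_subset)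
  next
    show "continuous_on ({-1<..<1} \<times> cbox 0 (pi/2)) (\<lambda>(x, t). def x t)" by (rule def_cont)
  next
    show "x \<in> {-1<..<1}" by (rule x)
  next
    show "convex {-1<..<1::real}" by (rule convex_real_interval(8))
  qed
  then have "((\<lambda>x. integral {0..pi/2} (ef x)) has_field_derivative integral {0..pi/2} (def x)) (at x)"
    using x by (simp add: at_within_open[of x "{-1<..<1}"])
  moreover have "ellEc = (\<lambda>x. integral {0..pi/2} (ef x))" by (rule ext) (rule ellEc_int)
  ultimately show ?thesis by simp
qed


lemma kf_int: "q\<^sup>2 < 1 \<Longrightarrow> (kf q has_integral ellK q) {0..pi/2}"
  unfolding ellK_int by (rule integrable_integral integrable_continuous_real continuous_on_subset[OF kf_cont])+ auto
lemma ef_int: "q\<^sup>2 < 1 \<Longrightarrow> (ef q has_integral ellEc q) {0..pi/2}"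
  unfolding ellEc_int by (rule integrable_integral integrable_continuous_real continuous_on_subset[OF ef_cont])+ auto

lemma q_sq: "0 < q \<Longrightarrow> q < (1::real) \<Longrightarrow> q\<^sup>2 < 1"
  by (simp add: abs_square_less_1)

lemma E_deriv: assumes q: "0 < q" "q < 1"
  shows "(ellEc has_real_derivative (ellEc q - ellK q) / q) (at q)"
proof -
  have q2: "q\<^sup>2 < 1" using q_sq[OF q] .
  have "((\<lambda>t. (ef q t - kf q t) / q) has_integral (ellEc q - ellK q) / q) {0..pi/2}"
    by (intro has_integral_divide has_integral_diff ef_int kf_int q2)
  moreover have "(ef q t - kf q t) / q = def q t" for t
  proof -
    define r where "r = sqrt (1 - q\<^sup>2 * (sin t)\<^sup>2)"
    have D: "0 < 1 - q\<^sup>2 * (sin t)\<^sup>2" using D_pos[OF q2] .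
    have r0: "r > 0" using D by (simp add: r_def)
    have rr: "r * r = 1 - q\<^sup>2 * (sin t)\<^sup>2" using D by (simp add: r_def)
    have "(r - 1 / r) / q = (r * r - 1) / (r * q)" using r0 q by (simp add: field_simps)
    also have "\<dots> = (- (q\<^sup>2 * (sin t)\<^sup>2)) / (r * q)" using rr by simp
    also have "\<dots> = - q * (sin t)\<^sup>2 / r" using r0 q by (simp add: field_simps power2_eq_square)
    finally have "(r - 1 / r) / q = - q * (sin t)\<^sup>2 / r" .
    then show ?thesis by (simp add: ef_def kf_def def_def r_def)
  qed
  ultimately have "(def q has_integral (ellEc q - ellK q) / q) {0..pi/2}" by simp
  then have "integral {0..pi/2} (def q) = (ellEc q - ellK q) / q" by (rule integral_unique)
  with E_deriv_int[of q] q show ?thesis by simp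
qed

definition Gf :: "real \<Rightarrow> real \<Rightarrow> real" where
  "Gf q t = sin t * cos t / sqrt (1 - q\<^sup>2 * (sin t)\<^sup>2)"
definition dGf :: "real \<Rightarrow> real \<Rightarrow> real" where
  "dGf q t = (1 - 2 * (sin t)\<^sup>2 + q\<^sup>2 * (sin t)^4) / ((1 - q\<^sup>2 * (sin t)\<^sup>2) * sqrt (1 - q\<^sup>2 * (sin t)\<^sup>2))"

lemma sqrtD_dt: assumes "q\<^sup>2 < 1"
  shows "((\<lambda>t. sqrt (1 - q\<^sup>2 * (sin t)\<^sup>2)) has_real_derivative
     inverse (sqrt (1 - q\<^sup>2 * (sin t)\<^sup>2)) / 2 * (- (q\<^sup>2 * (2 * sin t * cos t)))) (at t)"
proof -
  have D: "0 < 1 - q\<^sup>2 * (sin t)\<^sup>2" using D_pos[OF assms] .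
  have dg: "((\<lambda>t. 1 - q\<^sup>2 * (sin t)\<^sup>2) has_real_derivative - (q\<^sup>2 * (2 * sin t * cos t))) (at t)"
    by (auto intro!: derivative_eq_intros)
  show ?thesis by (rule DERIV_chain2[OF DERIV_real_sqrt[OF D] dg])
qed

lemma Gf_deriv: assumes q2: "q\<^sup>2 < 1" shows "(Gf q has_real_derivative dGf q t) (at t)"
proof -
  define r where "r = sqrt (1 - q\<^sup>2 * (sin t)\<^sup>2)"
  have D: "0 < 1 - q\<^sup>2 * (sin t)\<^sup>2" using D_pos[OF q2] .
  have r0: "r > 0" using D by (simp add: r_def)
  have rr: "r * r = 1 - q\<^sup>2 * (sin t)\<^sup>2" using D by (simp add: r_def)
  have dn: "((\<lambda>t. sin t * cos t) has_real_derivative cos t * cos t - sin t * sin t) (at t)"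
    by (auto intro!: derivative_eq_intros)
  have "((\<lambda>t. sin t * cos t / sqrt (1 - q\<^sup>2 * (sin t)\<^sup>2)) has_real_derivative
     ((cos t * cos t - sin t * sin t) * r - sin t * cos t * (inverse r / 2 * (- (q\<^sup>2 * (2 * sin t * cos t))))) / (r * r)) (at t)"
    unfolding r_def by (rule DERIV_divide[OF dn sqrtD_dt[OF q2]]) (use D in simp)
  moreover have "((cos t * cos t - sin t * sin t) * r - sin t * cos t * (inverse r / 2 * (- (q\<^sup>2 * (2 * sin t * cos t))))) / (r * r)
     = dGf q t"
  proof -
    have c2: "cos t * cos t = 1 - sin t * sin t" using sin_cos_squared_add[of t] by (simp add: power2_eq_square)
    have "((cos t * cos t - sin t * sin t) * r - sin t * cos t * (inverse r / 2 * (- (q\<^sup>2 * (2 * sin t * cos t))))) / (r * r)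
       = ((cos t * cos t - sin t * sin t) * (r * r) + q\<^sup>2 * (sin t * sin t) * (cos t * cos t)) / ((r * r) * r)"
      using r0 by (simp add: field_simps)
    also have "\<dots> = (1 - 2 * (sin t)\<^sup>2 + q\<^sup>2 * (sin t)^4) / ((1 - q\<^sup>2 * (sin t)\<^sup>2) * r)"
      unfolding c2 rr by (simp add: algebra_simps power2_eq_square power4_eq_xxxx)
    finally show ?thesis by (simp add: dGf_def r_def)
  qed
  ultimately show ?thesis unfolding Gf_def[abs_def] by simp
qed

lemma dGf_int: assumes q2: "q\<^sup>2 < 1" shows "(dGf q has_integral 0) {0..pi/2}"
proof -
  have "(dGf q has_integral (Gf q (pi/2) - Gf q 0)) {0..pi/2}"
    by (rule fundamental_theorem_of_calculus)
       (auto intro!: DERIV_subset[OF Gf_deriv[OF q2]] simp: has_real_derivative_iff_has_vector_derivative[symmetric])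
  then show ?thesis by (simp add: Gf_def)
qed

lemma K_deriv: assumes q: "0 < q" "q < 1"
  shows "(ellK has_real_derivative ellEc q / (q * (1 - q\<^sup>2)) - ellK q / q) (at q)"
proof -
  have q2: "q\<^sup>2 < 1" using q_sq[OF q] .
  define A where "A = 1 / (q * (1 - q\<^sup>2))"
  define B where "B = - 1 / q"
  define C where "C = - q / (1 - q\<^sup>2)"
  have "((\<lambda>t. A * ef q t + B * kf q t + C * dGf q t) has_integral A * ellEc q + B * ellK q + C * 0) {0..pi/2}"
    by (intro has_integral_add has_integral_mult_right ef_int kf_int dGf_int q2)
  moreover have "A * ef q t + B * kf q t + C * dGf q t = dkf q t" for t
  proof -
    define r where "r = sqrt (1 - q\<^sup>2 * (sin t)\<^sup>2)"
    define s where "s = (sin t)\<^sup>2"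
    have D: "0 < 1 - q\<^sup>2 * (sin t)\<^sup>2" using D_pos[OF q2] .
    have r0: "r > 0" using D by (simp add: r_def)
    have rr: "r * r = 1 - q\<^sup>2 * s" using D by (simp add: r_def s_def)
    have q1: "1 - q\<^sup>2 \<noteq> 0" using q2 by simp
    have "A * r + B / r + C * ((1 - 2 * s + q\<^sup>2 * s\<^sup>2) / ((1 - q\<^sup>2 * s) * r)) = q * s / ((1 - q\<^sup>2 * s) * r)"
    proof -
      have D': "1 - q\<^sup>2 * s \<noteq> 0" using D by (simp add: s_def)
      have "A * r + B / r + C * ((1 - 2 * s + q\<^sup>2 * s\<^sup>2) / ((1 - q\<^sup>2 * s) * r))
          = (A * (r * r) * (1 - q\<^sup>2 * s) + B * (1 - q\<^sup>2 * s) + C * (1 - 2 * s + q\<^sup>2 * s\<^sup>2)) / ((1 - q\<^sup>2 * s) * r)"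
        using r0 D' by (simp add: field_simps)
      also have "A * (r * r) * (1 - q\<^sup>2 * s) + B * (1 - q\<^sup>2 * s) + C * (1 - 2 * s + q\<^sup>2 * s\<^sup>2) = q * s"
      proof -
        let ?D = "1 - q\<^sup>2 * s" and ?Z = "1 - 2 * s + q\<^sup>2 * s\<^sup>2" and ?m = "q * (1 - q\<^sup>2)"
        have m0: "?m \<noteq> 0" using q q1 by simp
        have a: "A * ?m = 1" using m0 by (simp add: A_def)
        have b: "B * ?m = - (1 - q\<^sup>2)" using q by (simp add: B_def)
        have c: "C * ?m = - q\<^sup>2" using q1 by (simp add: C_def power2_eq_square)
        have "(A * (r * r) * ?D + B * ?D + C * ?Z) * ?m = (A * ?m) * (?D * ?D) + (B * ?m) * ?D + (C * ?m) * ?Z"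
          unfolding rr by (simp add: algebra_simps)
        also have "\<dots> = ?D * ?D + (- (1 - q\<^sup>2)) * ?D + (- q\<^sup>2) * ?Z" unfolding a b c by simp
        also have "\<dots> = (q * s) * ?m" by (simp add: algebra_simps power2_eq_square)
        finally show ?thesis using m0 by simp
      qed
      finally show ?thesis .
    qed
    moreover have rs: "r = sqrt (1 - q\<^sup>2 * s)" by (simp add: r_def s_def)
    moreover have s4: "(sin t)^4 = s\<^sup>2" by (simp add: s_def power2_eq_square power4_eq_xxxx)
    moreover have "ef q t = r" by (simp add: ef_def r_def)
    moreover have "kf q t = 1 / r" by (simp add: kf_def r_def)
    moreover have "dGf q t = (1 - 2 * s + q\<^sup>2 * s\<^sup>2) / ((1 - q\<^sup>2 * s) * r)"
      unfolding dGf_def s4 s_def[symmetric] rs[symmetric] ..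
    moreover have "dkf q t = q * s / ((1 - q\<^sup>2 * s) * r)"
      unfolding dkf_def s_def[symmetric] rs[symmetric] ..
    ultimately show ?thesis by simp
  qed
  ultimately have "(dkf q has_integral A * ellEc q + B * ellK q) {0..pi/2}" by simp
  then have "integral {0..pi/2} (dkf q) = A * ellEc q + B * ellK q" by (rule integral_unique)
  with K_deriv_int[of q] q show ?thesis by (simp add: A_def B_def)
qed



lemma int_lower:
  fixes f :: "real \<Rightarrow> real"
  assumes "continuous_on {a..b} f" "a \<le> b" "\<And>x. x \<in> {a..b} \<Longrightarrow> c \<le> f x"
  shows "(b - a) * c \<le> integral {a..b} f"
proof -
  have "((\<lambda>x. c) has_integral (b - a) * c) {a..b}" using has_integral_const_real[of c a b] assms(2) by simp
  moreover have "(f has_integral integral {a..b} f) {a..b}" using assms(1) by (simp add: integrable_continuous_real integrable_integral)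
  ultimately show ?thesis by (rule has_integral_le) (use assms(3) in auto)
qed

lemma int_upper:
  fixes f :: "real \<Rightarrow> real"
  assumes "continuous_on {a..b} f" "a \<le> b" "\<And>x. x \<in> {a..b} \<Longrightarrow> f x \<le> c"
  shows "integral {a..b} f \<le> (b - a) * c"
proof -
  have "((\<lambda>x. c) has_integral (b - a) * c) {a..b}" using has_integral_const_real[of c a b] assms(2) by simp
  moreover have "(f has_integral integral {a..b} f) {a..b}" using assms(1) by (simp add: integrable_continuous_real integrable_integral)
  ultimately show ?thesis using has_integral_le[of f "integral {a..b} f" "{a..b}" "\<lambda>x. c" "(b - a) * c"] assms(3) by blast
qed

lemma int_split:
  fixes f :: "real \<Rightarrow> real"
  assumes "continuous_on UNIV f" "a \<le> c" "c \<le> b"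
  shows "integral {a..b} f = integral {a..c} f + integral {c..b} f"
  using Henstock_Kurzweil_Integration.integral_combine[where a=a and c=c and b=b and f=f] assms
  by (simp add: integrable_continuous_real continuous_on_subset)

lemma sin2_le1: "(sin (t::real))\<^sup>2 \<le> 1"
  using sin_cos_squared_add[of t] zero_le_power2[of "cos t"] by linarith

lemma ef_le_kf: "q\<^sup>2 < 1 \<Longrightarrow> ef q t \<le> kf q t"
proof -
  assume q: "q\<^sup>2 < 1"
  have D: "0 < 1 - q\<^sup>2 * (sin t)\<^sup>2" "1 - q\<^sup>2 * (sin t)\<^sup>2 \<le> 1" using D_pos[OF q] by auto
  then have "sqrt (1 - q\<^sup>2 * (sin t)\<^sup>2) \<le> 1" by simp
  moreover have "0 < sqrt (1 - q\<^sup>2 * (sin t)\<^sup>2)" using D by simp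
  ultimately show ?thesis unfolding ef_def kf_def
    by (smt (verit) le_divide_eq_1_pos mult_le_one real_sqrt_ge_zero)
qed

lemma ef_le1: "q\<^sup>2 < 1 \<Longrightarrow> ef q t \<le> 1"
  using D_pos[of q t] by (simp add: ef_def)

lemma pi2_pos: "0 \<le> pi / 2" by simp

lemma E_le_K: "q\<^sup>2 < 1 \<Longrightarrow> ellEc q \<le> ellK q"
  using has_integral_le[OF ef_int kf_int ef_le_kf] by blast

lemma K_ge: "q\<^sup>2 < 1 \<Longrightarrow> pi/2 \<le> ellK q"
  using int_lower[OF continuous_on_subset[OF kf_cont] pi2_pos, of q 1] kf_ge1 by (simp add: ellK_int)

lemma E_le: "q\<^sup>2 < 1 \<Longrightarrow> ellEc q \<le> pi/2"
  using int_upper[OF continuous_on_subset[OF ef_cont] pi2_pos, of q 1] ef_le1 by (simp add: ellEc_int)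

lemma cos_le_ef: assumes q: "q\<^sup>2 < 1" and t: "t \<in> {0..pi/2}" shows "cos t \<le> ef q t"
proof -
  have c: "0 \<le> cos t" using t by (intro cos_ge_zero) auto
  have "q\<^sup>2 * (sin t)\<^sup>2 \<le> (sin t)\<^sup>2" using q by (simp add: mult_left_le_one_le less_imp_le)
  then have "(cos t)\<^sup>2 \<le> 1 - q\<^sup>2 * (sin t)\<^sup>2" using sin_cos_squared_add[of t] by linarith
  then have "sqrt ((cos t)\<^sup>2) \<le> sqrt (1 - q\<^sup>2 * (sin t)\<^sup>2)" by (rule real_sqrt_le_mono)
  then show ?thesis using c by (simp add: ef_def)
qed

lemma E_ge1: assumes q: "q\<^sup>2 < 1" shows "1 \<le> ellEc q"
proof -
  have "(cos has_integral (sin (pi/2) - sin 0)) {0..pi/2}"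
    by (rule fundamental_theorem_of_calculus) (auto intro!: derivative_eq_intros simp: has_real_derivative_iff_has_vector_derivative[symmetric])
  then have "(cos has_integral 1) {0..pi/2}" by simp
  from has_integral_le[OF this ef_int[OF q]] cos_le_ef[OF q] show ?thesis by blast
qed

lemma E_pos: assumes "q\<^sup>2 < 1" shows "0 < ellEc q" using E_ge1[OF assms] by linarith
lemma K_pos: assumes "q\<^sup>2 < 1" shows "0 < ellK q" using K_ge[OF assms] pi_gt_zero by linarith

lemma K0: "ellK 0 = pi/2"
proof -
  have "kf 0 = (\<lambda>t. 1)" by (rule ext) (simp add: kf_def)
  then show ?thesis by (simp add: ellK_int)
qed
lemma E0: "ellEc 0 = pi/2"
proof -
  have "ef 0 = (\<lambda>t. 1)" by (rule ext) (simp add: ef_def)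
  then show ?thesis by (simp add: ellEc_int)
qed

lemma K_isCont: "-1 < q \<Longrightarrow> q < 1 \<Longrightarrow> isCont ellK q"
  using K_deriv_int[of q] DERIV_isCont by auto
lemma E_isCont: "-1 < q \<Longrightarrow> q < 1 \<Longrightarrow> isCont ellEc q"
  using E_deriv_int[of q] DERIV_isCont by auto

definition hh :: "real \<Rightarrow> real" where "hh q = 2 * ellEc q - ellK q"

lemma hh_deriv: assumes "0 < q" "q < 1"
  shows "(hh has_real_derivative 2 * ((ellEc q - ellK q) / q) - (ellEc q / (q * (1 - q\<^sup>2)) - ellK q / q)) (at q)"
  unfolding hh_def[abs_def] by (intro DERIV_diff DERIV_cmult E_deriv[OF assms] K_deriv[OF assms])

lemma hh_deriv_neg: assumes q: "0 < q" "q < 1"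
  shows "2 * ((ellEc q - ellK q) / q) - (ellEc q / (q * (1 - q\<^sup>2)) - ellK q / q) < 0"
proof -
  have q2: "q\<^sup>2 < 1" using q_sq[OF q] .
  let ?d = "2 * ((ellEc q - ellK q) / q) - (ellEc q / (q * (1 - q\<^sup>2)) - ellK q / q)"
  have m: "q * (1 - q\<^sup>2) > 0" using q q2 by simp
  have "?d * (q * (1 - q\<^sup>2)) = ellEc q * (1 - 2 * q\<^sup>2) - ellK q * (1 - q\<^sup>2)"
    using q q2 by (simp add: field_simps)
  also have "\<dots> \<le> ellEc q * (1 - 2 * q\<^sup>2) - ellEc q * (1 - q\<^sup>2)"
    using E_le_K[OF q2] q2 by (simp add: mult_right_mono)
  also have "\<dots> < 0" using E_pos[OF q2] q by (simp add: algebra_simps)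
  finally have "?d * (q * (1 - q\<^sup>2)) < 0" .
  then show ?thesis using m by (metis mult_less_0_iff less_asym)
qed

lemma hh_isCont: "-1 < q \<Longrightarrow> q < 1 \<Longrightarrow> isCont hh q"
  unfolding hh_def[abs_def] by (intro continuous_intros E_isCont K_isCont)

lemma hh_strict: assumes "0 \<le> a" "a < b" "b < 1" shows "hh b < hh a"
proof -
  have "(\<lambda>x. - hh x) a < (\<lambda>x. - hh x) b"
  proof (rule DERIV_pos_imp_increasing_open[OF assms(2)])
    fix x assume x: "a < x" "x < b"
    then have x': "0 < x" "x < 1" using assms by auto
    show "\<exists>y. ((\<lambda>x. - hh x) has_real_derivative y) (at x) \<and> 0 < y"
      using DERIV_minus[OF hh_deriv[OF x']] hh_deriv_neg[OF x'] by force
  next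
    show "continuous_on {a..b} (\<lambda>x. - hh x)"
      using assms by (intro continuous_at_imp_continuous_on ballI continuous_intros hh_isCont) auto
  qed
  then show ?thesis by simp
qed

lemma K_log: assumes e: "0 < e" "e < 1" shows "- ln e \<le> ellK (sqrt (1 - e\<^sup>2))"
proof -
  define q where "q = sqrt (1 - e\<^sup>2)"
  have e2: "e\<^sup>2 < 1" using e by (simp add: power_less_one_iff abs_square_less_1)
  have qq: "q\<^sup>2 = 1 - e\<^sup>2" using e2 by (simp add: q_def)
  have q2: "q\<^sup>2 < 1" using qq e by simp
  have bnd: "1 / (e + (pi/2 - t)) \<le> kf q t" if t: "t \<in> {0..pi/2}" for t
  proof -
    have c0: "0 \<le> cos t" using t by (intro cos_ge_zero) auto
    have "cos t = sin (pi/2 - t)" by (simp add: cos_sin_eq)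
    also have "\<dots> \<le> pi/2 - t" using t by (intro sin_x_le_x) auto
    finally have cle: "cos t \<le> pi/2 - t" .
    have "1 - q\<^sup>2 * (sin t)\<^sup>2 = (cos t)\<^sup>2 + e\<^sup>2 * (sin t)\<^sup>2"
      unfolding qq using sin_cos_squared_add[of t] by (simp add: algebra_simps)
    also have "\<dots> \<le> (pi/2 - t)\<^sup>2 + e\<^sup>2"
      using power_mono[OF cle c0, of 2] sin2_le1[of t] e
      by (smt (verit) mult_left_le zero_le_power2)
    also have "\<dots> \<le> (e + (pi/2 - t))\<^sup>2" using e t by (simp add: power2_eq_square algebra_simps)
    finally have "sqrt (1 - q\<^sup>2 * (sin t)\<^sup>2) \<le> e + (pi/2 - t)"
      using e t by (metis real_sqrt_le_mono real_sqrt_abs abs_of_nonneg add_nonneg_nonneg diff_ge_0_iff_ge atLeastAtMost_iff less_imp_le)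
    moreover have "0 < sqrt (1 - q\<^sup>2 * (sin t)\<^sup>2)" using D_pos[OF q2] by simp
    ultimately show ?thesis unfolding kf_def by (simp add: frac_le)
  qed
  have F: "((\<lambda>t. 1 / (e + (pi/2 - t))) has_integral ((- ln (e + (pi/2 - pi/2))) - (- ln (e + (pi/2 - 0))))) {0..pi/2}"
  proof (rule fundamental_theorem_of_calculus)
    show "0 \<le> pi/2" by simp
    fix t assume t: "t \<in> {0..pi/2}"
    have "((\<lambda>t. - ln (e + (pi/2 - t))) has_real_derivative - ((0 + (0 - 1)) / (e + (pi/2 - t)))) (at t)"
      using t e by (intro derivative_eq_intros) auto
    then have "((\<lambda>t. - ln (e + (pi/2 - t))) has_real_derivative 1 / (e + (pi/2 - t))) (at t)" by simp
    then have "((\<lambda>t. - ln (e + (pi/2 - t))) has_real_derivative 1 / (e + (pi/2 - t))) (at t within {0..pi/2})"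
      by (rule DERIV_subset) simp
    then show "((\<lambda>t. - ln (e + (pi/2 - t))) has_vector_derivative 1 / (e + (pi/2 - t))) (at t within {0..pi/2})"
      by (simp add: has_real_derivative_iff_has_vector_derivative)
  qed
  have "ln (e + pi/2) - ln e \<le> ellK q"
    using has_integral_le[OF F kf_int[OF q2] bnd] by simp
  moreover have "0 \<le> ln (e + pi/2)" using e pi_gt3 by simp
  ultimately show ?thesis by (simp add: q_def)
qed

lemma K_big: "\<exists>q. 0 < q \<and> q < 1 \<and> 3/4 \<le> q\<^sup>2 \<and> M \<le> ellK q"
proof -
  define M' where "M' = max M 1"
  define e where "e = exp (- M')"
  have M1: "1 \<le> M'" by (simp add: M'_def)
  have e0: "0 < e" by (simp add: e_def)
  have "2 \<le> exp M'" using exp_ge_add_one_self[of M'] M1 by linarith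
  then have eh: "e \<le> 1/2" by (simp add: e_def exp_minus field_simps)
  have e1: "e < 1" using eh by simp
  define q where "q = sqrt (1 - e\<^sup>2)"
  have e2: "e\<^sup>2 \<le> 1/4" using eh e0 power_mono[OF eh, of 2] by (simp add: power2_eq_square)
  have qq: "q\<^sup>2 = 1 - e\<^sup>2" using e2 by (simp add: q_def)
  show ?thesis
  proof (intro exI conjI)
    show "0 < q" using e2 by (simp add: q_def)
    show "q < 1" using e0 by (simp add: q_def)
    show "3/4 \<le> q\<^sup>2" using qq e2 by simp
    have "M \<le> - ln e" by (simp add: e_def M'_def)
    also have "\<dots> \<le> ellK q" unfolding q_def by (rule K_log[OF e0 e1])
    finally show "M \<le> ellK q" .
  qed
qed

lemma hh0: "hh 0 = pi/2" by (simp add: hh_def K0 E0)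

lemma q_star_ex: "\<exists>q. 0 \<le> q \<and> q < 1 \<and> hh q = 0"
proof -
  obtain q0 where q0: "0 < q0" "q0 < 1" "pi + 1 \<le> ellK q0" using K_big[of "pi + 1"] by blast
  have q02: "q0\<^sup>2 < 1" using q_sq[OF q0(1,2)] .
  have "hh q0 \<le> 0" using E_le[OF q02] q0 by (simp add: hh_def)
  moreover have "0 \<le> hh 0" by (simp add: hh0)
  ultimately have "\<exists>x\<ge>0. x \<le> q0 \<and> hh x = 0"
    by (intro IVT2) (use q0 in \<open>auto intro!: hh_isCont\<close>)
  then show ?thesis using q0 by force
qed

lemma q_star_uniq: "0 \<le> a \<Longrightarrow> a < 1 \<Longrightarrow> hh a = 0 \<Longrightarrow> 0 \<le> b \<Longrightarrow> b < 1 \<Longrightarrow> hh b = 0 \<Longrightarrow> a = b"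
  using hh_strict[of a b] hh_strict[of b a] by (cases a b rule: linorder_cases) auto

lemma q_star: "0 \<le> q_star \<and> q_star < 1 \<and> hh q_star = 0"
proof -
  have "\<exists>!q. 0 \<le> q \<and> q < 1 \<and> hh q = 0" using q_star_ex q_star_uniq by blast
  then have "0 \<le> q_star \<and> q_star < 1 \<and> hh q_star = 0"
    unfolding q_star_def hh_def[symmetric] by (rule theI')
  then show ?thesis .
qed

lemma hh_pos: "0 \<le> q \<Longrightarrow> q < q_star \<Longrightarrow> 0 < hh q"
  using hh_strict[of q q_star] q_star by auto
lemma hh_neg: "q_star < q \<Longrightarrow> q < 1 \<Longrightarrow> hh q < 0"
  using hh_strict[of q_star q] q_star by auto

lemma kf_le: assumes "q\<^sup>2 < 1" "0 < c" "1 / c\<^sup>2 \<le> 1 - q\<^sup>2 * (sin t)\<^sup>2" shows "kf q t \<le> c"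
proof -
  have "sqrt (1 / c\<^sup>2) \<le> sqrt (1 - q\<^sup>2 * (sin t)\<^sup>2)" using assms(3) by (rule real_sqrt_le_mono)
  then have "1 / c \<le> sqrt (1 - q\<^sup>2 * (sin t)\<^sup>2)" using assms(2) by (simp add: real_sqrt_divide)
  moreover have "0 < sqrt (1 - q\<^sup>2 * (sin t)\<^sup>2)" using D_pos[OF assms(1)] by simp
  ultimately show ?thesis using assms(2) unfolding kf_def by (simp add: divide_le_eq mult.commute)
qed

lemma ef_ge: assumes "0 \<le> c" "c\<^sup>2 \<le> 1 - q\<^sup>2 * (sin t)\<^sup>2" shows "c \<le> ef q t"
  unfolding ef_def using assms by (simp add: real_le_rsqrt)

lemma sin2_le_on: assumes "0 \<le> t" "t \<le> x" "x \<le> pi/2" shows "(sin t)\<^sup>2 \<le> (sin x)\<^sup>2"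
proof -
  have "0 \<le> sin t" using assms by (intro sin_ge_zero) auto
  moreover have "sin t \<le> sin x" using assms by (intro sin_monotone_2pi_le) auto
  ultimately show ?thesis by (simp add: power_mono)
qed

lemma D_lower: fixes q t S :: real assumes "(sin t)\<^sup>2 \<le> S" shows "1 - q\<^sup>2 * S \<le> 1 - q\<^sup>2 * (sin t)\<^sup>2"
  using mult_left_mono[OF assms, of "q\<^sup>2"] by simp

lemma D_lower1: fixes q t :: real shows "1 - q\<^sup>2 \<le> 1 - q\<^sup>2 * (sin t)\<^sup>2"
  using D_lower[OF sin2_le1[of t], of q] by simp

lemma N1: "0 < hh (1 / sqrt 2)"
proof -
  define q where "q = 1 / sqrt 2"
  have qq: "q\<^sup>2 = 1/2" by (simp add: q_def power_divide)
  have q2: "q\<^sup>2 < 1" using qq by simp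
  have s45: "(sin (pi/4))\<^sup>2 = 1/2" by (simp add: sin_45 power_divide)
  have "ellEc q = integral {0..pi/4} (ef q) + integral {pi/4..pi/2} (ef q)"
    unfolding ellEc_int by (rule int_split[OF ef_cont[OF q2]]) (use pi_gt_zero in auto)
  moreover have "(pi/4 - 0) * (86/100) \<le> integral {0..pi/4} (ef q)"
  proof (rule int_lower[OF continuous_on_subset[OF ef_cont[OF q2]]])
    fix t assume t: "t \<in> {0..pi/4}"
    have "(sin t)\<^sup>2 \<le> 1/2" using sin2_le_on[of t "pi/4"] t s45 by auto
    from D_lower[OF this, of q] qq show "86/100 \<le> ef q t" by (intro ef_ge) (auto simp: power2_eq_square)
  qed auto
  moreover have "(pi/2 - pi/4) * (7/10) \<le> integral {pi/4..pi/2} (ef q)"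
  proof (rule int_lower[OF continuous_on_subset[OF ef_cont[OF q2]]])
    fix t assume t: "t \<in> {pi/4..pi/2}"
    from D_lower1[of q t] qq show "7/10 \<le> ef q t" by (intro ef_ge) (auto simp: power2_eq_square)
  qed auto
  moreover have "ellK q \<le> (pi/2 - 0) * (142/100)"
    unfolding ellK_int
  proof (rule int_upper[OF continuous_on_subset[OF kf_cont[OF q2]]])
    fix t assume t: "t \<in> {0..pi/2}"
    from D_lower1[of q t] qq show "kf q t \<le> 142/100" by (intro kf_le q2) (auto simp: power2_eq_square)
  qed auto
  ultimately have "ellK q < 2 * ellEc q" by (simp add: algebra_simps) (use pi_gt_zero in linarith)
  then show ?thesis by (simp add: hh_def q_def)
qed

lemma N2: assumes q: "0 \<le> q" "q\<^sup>2 \<le> 86/100" shows "ellK q \<le> 317/100"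
proof -
  have q2: "q\<^sup>2 < 1" using q by simp
  have s60: "(sin (pi/3))\<^sup>2 = 3/4" by (simp add: sin_60 power_divide)
  have "ellK q = integral {0..pi/3} (kf q) + integral {pi/3..pi/2} (kf q)"
    unfolding ellK_int by (rule int_split[OF kf_cont[OF q2]]) (use pi_gt_zero in auto)
  moreover have "integral {0..pi/3} (kf q) \<le> (pi/3 - 0) * (168/100)"
  proof (rule int_upper[OF continuous_on_subset[OF kf_cont[OF q2]]])
    fix t assume t: "t \<in> {0..pi/3}"
    have "(sin t)\<^sup>2 \<le> 3/4" using sin2_le_on[of t "pi/3"] t s60 by auto
    from D_lower[OF this, of q] q have "355/1000 \<le> 1 - q\<^sup>2 * (sin t)\<^sup>2" by linarith
    then show "kf q t \<le> 168/100" by (intro kf_le q2) (auto simp: power2_eq_square)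
  qed auto
  moreover have "integral {pi/3..pi/2} (kf q) \<le> (pi/2 - pi/3) * (268/100)"
  proof (rule int_upper[OF continuous_on_subset[OF kf_cont[OF q2]]])
    fix t assume t: "t \<in> {pi/3..pi/2}"
    from D_lower1[of q t] q have "14/100 \<le> 1 - q\<^sup>2 * (sin t)\<^sup>2" by linarith
    then show "kf q t \<le> 268/100" by (intro kf_le q2) (auto simp: power2_eq_square)
  qed auto
  moreover have "pi \<le> 31416 / 10000" using pi_approx(2) by simp
  ultimately show ?thesis by (simp add: algebra_simps)
qed



lemma f_deriv: assumes q: "0 < q" "q < 1"
  shows "(f_aux has_real_derivative q * ((20 * q\<^sup>2 - 13) * ellK q - 20 * (2 * q\<^sup>2 - 1) * ellEc q)) (at q)"
proof -
  have q2: "q\<^sup>2 < 1" using q_sq[OF q] .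
  have P1: "((\<lambda>q. 4*q^4 - 5*q\<^sup>2 + 1) has_real_derivative 16*q^3 - 10*q) (at q)"
    by (auto intro!: derivative_eq_intros simp: power2_eq_square power3_eq_cube)
  have P2: "((\<lambda>q. -8*q^4 + 8*q\<^sup>2 - 1) has_real_derivative -32*q^3 + 16*q) (at q)"
    by (auto intro!: derivative_eq_intros simp: power2_eq_square power3_eq_cube)
  have D: "(f_aux has_real_derivative
      (16*q^3 - 10*q) * ellK q + (ellEc q / (q * (1 - q\<^sup>2)) - ellK q / q) * (4*q^4 - 5*q\<^sup>2 + 1)
    + ((-32*q^3 + 16*q) * ellEc q + ((ellEc q - ellK q) / q) * (-8*q^4 + 8*q\<^sup>2 - 1))) (at q)"
    unfolding f_aux_def[abs_def] by (intro DERIV_add DERIV_mult P1 P2 K_deriv[OF q] E_deriv[OF q])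
  have m: "q \<noteq> 0" "1 - q\<^sup>2 \<noteq> 0" using q q2 by auto
  have a: "(ellEc q / (q * (1 - q\<^sup>2)) - ellK q / q) * (4*q^4 - 5*q\<^sup>2 + 1)
     = ((1 - 4*q\<^sup>2) * ellEc q - (1 - 4*q\<^sup>2) * (1 - q\<^sup>2) * ellK q) / q"
  proof -
    have "4*q^4 - 5*q\<^sup>2 + 1 = (1 - q\<^sup>2) * (1 - 4*q\<^sup>2)" by (simp add: algebra_simps power2_eq_square power4_eq_xxxx)
    then show ?thesis using m by (simp add: field_simps)
  qed
  have "(16*q^3 - 10*q) * ellK q + ((1 - 4*q\<^sup>2) * ellEc q - (1 - 4*q\<^sup>2) * (1 - q\<^sup>2) * ellK q) / q
    + ((-32*q^3 + 16*q) * ellEc q + ((ellEc q - ellK q) / q) * (-8*q^4 + 8*q\<^sup>2 - 1))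
    = q * ((20 * q\<^sup>2 - 13) * ellK q - 20 * (2 * q\<^sup>2 - 1) * ellEc q)"
  proof -
    have "q * ((16*q^3 - 10*q) * ellK q + ((1 - 4*q\<^sup>2) * ellEc q - (1 - 4*q\<^sup>2) * (1 - q\<^sup>2) * ellK q) / q
    + ((-32*q^3 + 16*q) * ellEc q + ((ellEc q - ellK q) / q) * (-8*q^4 + 8*q\<^sup>2 - 1)))
      = q * (16*q^3 - 10*q) * ellK q + ((1 - 4*q\<^sup>2) * ellEc q - (1 - 4*q\<^sup>2) * (1 - q\<^sup>2) * ellK q)
    + (q * (-32*q^3 + 16*q) * ellEc q + (ellEc q - ellK q) * (-8*q^4 + 8*q\<^sup>2 - 1))"
      using m by (simp add: field_simps)
    also have "\<dots> = q * (q * ((20 * q\<^sup>2 - 13) * ellK q - 20 * (2 * q\<^sup>2 - 1) * ellEc q))"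
      by (simp add: algebra_simps power2_eq_square power3_eq_cube power4_eq_xxxx)
    finally show ?thesis using m by simp
  qed
  with D a show ?thesis by simp
qed

lemma f_isCont: "0 < q \<Longrightarrow> q < 1 \<Longrightarrow> isCont f_aux q"
  using f_deriv DERIV_isCont by blast

lemma g_hh: "g_aux q = 8 * (hh q)\<^sup>2 * (2 * q\<^sup>2 - 1)" by (simp add: g_aux_def hh_def)

lemma g_deriv: assumes q: "0 < q" "q < 1"
  shows "(g_aux has_real_derivative 16 * hh q * f_aux q / (q * (1 - q\<^sup>2))) (at q)"
proof -
  have q2: "q\<^sup>2 < 1" using q_sq[OF q] .
  have m: "q \<noteq> 0" "1 - q\<^sup>2 \<noteq> 0" using q q2 by auto
  let ?hd = "2 * ((ellEc q - ellK q) / q) - (ellEc q / (q * (1 - q\<^sup>2)) - ellK q / q)"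
  have P: "((\<lambda>q. 2 * q\<^sup>2 - 1) has_real_derivative 4 * q) (at q)"
    by (auto intro!: derivative_eq_intros)
  have H2: "((\<lambda>q. (hh q)\<^sup>2) has_real_derivative 2 * hh q * ?hd) (at q)"
    using DERIV_power[OF hh_deriv[OF q], of 2] by (simp add: ac_simps)
  have D: "(g_aux has_real_derivative 8 * (2 * hh q * ?hd) * (2 * q\<^sup>2 - 1) + 4 * q * (8 * (hh q)\<^sup>2)) (at q)"
    unfolding g_hh[abs_def] using DERIV_mult[OF DERIV_cmult[OF H2, of 8] P] by simp
  have "8 * (2 * hh q * ?hd) * (2 * q\<^sup>2 - 1) + 4 * q * (8 * (hh q)\<^sup>2) = 16 * hh q * f_aux q / (q * (1 - q\<^sup>2))"
  proof -
    have "(8 * (2 * hh q * ?hd) * (2 * q\<^sup>2 - 1) + 4 * q * (8 * (hh q)\<^sup>2)) * (q * (1 - q\<^sup>2))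
        = 16 * hh q * f_aux q"
    proof -
      define d where "d = ?hd"
      have e: "d * (q * (1 - q\<^sup>2)) = ellEc q * (1 - 2 * q\<^sup>2) - ellK q * (1 - q\<^sup>2)"
        using m by (simp add: field_simps d_def)
      have "(8 * (2 * hh q * d) * (2 * q\<^sup>2 - 1) + 4 * q * (8 * (hh q)\<^sup>2)) * (q * (1 - q\<^sup>2))
          = 16 * hh q * (d * (q * (1 - q\<^sup>2))) * (2 * q\<^sup>2 - 1) + 32 * q\<^sup>2 * (1 - q\<^sup>2) * (hh q)\<^sup>2"
        by (simp add: algebra_simps power2_eq_square)
      also have "\<dots> = 16 * hh q * f_aux q"
        unfolding e f_aux_def hh_def by (simp add: algebra_simps power2_eq_square power4_eq_xxxx)
      finally show ?thesis unfolding d_def .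
    qed
    then show ?thesis using m by (simp add: field_simps)
  qed
  with D show ?thesis by simp
qed

lemma g_isCont: "0 < q \<Longrightarrow> q < 1 \<Longrightarrow> isCont g_aux q"
  using g_deriv DERIV_isCont by blast



definition r0 :: real where "r0 = 1 / sqrt 2"
definition r1 :: real where "r1 = sqrt (86/100)"

lemma r0_sq: "r0\<^sup>2 = 1/2" by (simp add: r0_def power_divide)
lemma r1_sq: "r1\<^sup>2 = 86/100" by (simp add: r1_def)
lemma r0_pos: "0 < r0" by (simp add: r0_def)
lemma r1_pos: "0 < r1" by (simp add: r1_def)
lemma r0_r1: "r0 < r1"
proof -
  have "r0\<^sup>2 < r1\<^sup>2" by (simp add: r0_sq r1_sq)
  then show ?thesis using r0_pos r1_pos by (simp add: power_less_imp_less_base less_imp_le)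
qed
lemma r1_lt1: "r1 < 1" by (simp add: r1_def)

lemma sq_lt: "0 \<le> a \<Longrightarrow> a < b \<Longrightarrow> a\<^sup>2 < (b::real)\<^sup>2"
  by (simp add: power_strict_mono)
lemma sq_le: "0 \<le> a \<Longrightarrow> a \<le> b \<Longrightarrow> a\<^sup>2 \<le> (b::real)\<^sup>2"
  by (simp add: power_mono)

lemma fprime_neg: assumes x: "0 < x" "x < 1" "1/2 < x\<^sup>2" "x\<^sup>2 \<le> 86/100"
  shows "x * ((20 * x\<^sup>2 - 13) * ellK x - 20 * (2 * x\<^sup>2 - 1) * ellEc x) < 0"
proof -
  have x2: "x\<^sup>2 < 1" using q_sq[OF x(1,2)] .
  have K: "ellK x \<le> 317/100" using N2[of x] x by simp
  have Kp: "0 < ellK x" using K_pos[OF x2] .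
  have E: "1 \<le> ellEc x" using E_ge1[OF x2] .
  have "(20 * x\<^sup>2 - 13) * ellK x < 20 * (2 * x\<^sup>2 - 1) * ellEc x"
  proof (cases "20 * x\<^sup>2 \<le> 13")
    case True
    then have "(20 * x\<^sup>2 - 13) * ellK x \<le> 0" using Kp by (simp add: mult_nonpos_nonneg)
    moreover have "0 < 20 * (2 * x\<^sup>2 - 1) * ellEc x" using x E by simp
    ultimately show ?thesis by linarith
  next
    case False
    have "(20 * x\<^sup>2 - 13) * ellK x \<le> (20 * x\<^sup>2 - 13) * (317/100)"
      using False K by (intro mult_left_mono) auto
    also have "\<dots> < 20 * (2 * x\<^sup>2 - 1)" using x by simp
    also have "\<dots> \<le> 20 * (2 * x\<^sup>2 - 1) * ellEc x" using x E by simp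
    finally show ?thesis .
  qed
  then show ?thesis using x by (simp add: mult_pos_neg)
qed

lemma f_strict: assumes "0 < a" "1/2 \<le> a\<^sup>2" "a < b" "b\<^sup>2 \<le> 86/100" shows "f_aux b < f_aux a"
proof -
  have b1: "b < 1"
  proof -
    have "b\<^sup>2 < 1\<^sup>2" using assms(4) by simp
    then show ?thesis using assms by (smt (verit) power_mono)
  qed
  have "(\<lambda>x. - f_aux x) a < (\<lambda>x. - f_aux x) b"
  proof (rule DERIV_pos_imp_increasing_open[OF assms(3)])
    fix x assume x: "a < x" "x < b"
    have x': "0 < x" "x < 1" using x assms b1 by auto
    have "a\<^sup>2 < x\<^sup>2" using sq_lt[of a x] x assms by simp
    moreover have "x\<^sup>2 < b\<^sup>2" using sq_lt[of x b] x x' by simp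
    ultimately have "1/2 < x\<^sup>2" "x\<^sup>2 \<le> 86/100" using assms by auto
    then show "\<exists>y. ((\<lambda>x. - f_aux x) has_real_derivative y) (at x) \<and> 0 < y"
      using DERIV_minus[OF f_deriv[OF x']] fprime_neg[OF x'] by force
  next
    show "continuous_on {a..b} (\<lambda>x. - f_aux x)"
      using assms b1 by (intro continuous_at_imp_continuous_on ballI continuous_intros f_isCont) auto
  qed
  then show ?thesis by simp
qed

lemma f_neg: assumes q: "0 < q" "q < 1" "86/100 \<le> q\<^sup>2" shows "f_aux q < 0"
proof -
  have q2: "q\<^sup>2 < 1" using q_sq[OF q(1,2)] .
  define y where "y = q\<^sup>2"
  have q4: "q^4 = y\<^sup>2" by (simp add: y_def power2_eq_square power4_eq_xxxx)
  have A: "4 * q^4 - 5 * q\<^sup>2 + 1 < 0"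
  proof -
    have "4 * q^4 - 5 * q\<^sup>2 + 1 = - ((1 - y) * (4 * y - 1))" unfolding q4 y_def[symmetric]
      by (simp add: algebra_simps power2_eq_square)
    moreover have "0 < (1 - y) * (4 * y - 1)" using q q2 by (simp add: y_def)
    ultimately show ?thesis by simp
  qed
  have B: "-8 * q^4 + 8 * q\<^sup>2 - 1 < 0"
  proof -
    have "0 \<le> (y - 86/100) * (y - 14/100)" using q by (simp add: y_def)
    moreover have "(y - 86/100) * (y - 14/100) = y\<^sup>2 - y + 1204/10000" by (simp add: field_simps power2_eq_square)
    ultimately have "0 \<le> y\<^sup>2 - y + 1204/10000" by simp
    then show ?thesis unfolding q4 y_def[symmetric] by simp
  qed
  have "(4 * q^4 - 5 * q\<^sup>2 + 1) * ellK q < 0" using A K_pos[OF q2] by (simp add: mult_neg_pos)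
  moreover have "(-8 * q^4 + 8 * q\<^sup>2 - 1) * ellEc q < 0" using B E_pos[OF q2] by (simp add: mult_neg_pos)
  ultimately show ?thesis by (simp add: f_aux_def)
qed

lemma f_r0: "0 < f_aux r0"
proof -
  have q4: "r0^4 = 1/4"
  proof -
    have "r0^4 = (r0\<^sup>2)\<^sup>2" by (simp add: power2_eq_square power4_eq_xxxx)
    also have "\<dots> = 1/4" unfolding r0_sq by (simp add: power2_eq_square)
    finally show ?thesis .
  qed
  have "f_aux r0 = ellEc r0 - ellK r0 / 2" by (simp add: f_aux_def q4 r0_sq)
  moreover have "0 < hh r0" using N1 by (simp add: r0_def)
  ultimately show ?thesis by (simp add: hh_def)
qed

lemma f_r1: "f_aux r1 < 0"
  using f_neg[of r1] r1_pos r1_lt1 r1_sq by simp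

lemma q_hat_ex: "\<exists>q. r0 \<le> q \<and> q \<le> r1 \<and> f_aux q = 0"
proof -
  have "\<exists>x\<ge>r0. x \<le> r1 \<and> f_aux x = 0"
    by (rule IVT2) (use f_r0 f_r1 r0_r1 r0_pos r1_lt1 in \<open>auto intro!: f_isCont\<close>)
  then show ?thesis by blast
qed

lemma f_zero_sq: assumes "r0 \<le> q" "q < 1" "f_aux q = 0" shows "q\<^sup>2 < 86/100"
  using f_neg[of q] assms r0_pos by force

lemma q_hat_uniq: assumes "r0 \<le> a" "a < 1" "f_aux a = 0" "r0 \<le> b" "b < 1" "f_aux b = 0" shows "a = b"
proof -
  have a2: "1/2 \<le> a\<^sup>2" "1/2 \<le> b\<^sup>2" using sq_le[of r0 a] sq_le[of r0 b] assms r0_pos r0_sq by auto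
  have "a\<^sup>2 < 86/100" "b\<^sup>2 < 86/100" using f_zero_sq assms by auto
  then show ?thesis using f_strict[of a b] f_strict[of b a] a2 assms r0_pos
    by (cases a b rule: linorder_cases) auto
qed

lemma q_hat: "r0 \<le> q_hat \<and> q_hat < 1 \<and> f_aux q_hat = 0"
proof -
  have "\<exists>!q. r0 \<le> q \<and> q < 1 \<and> f_aux q = 0"
    using q_hat_ex q_hat_uniq r1_lt1 by (smt (verit))
  then show ?thesis unfolding q_hat_def r0_def[symmetric] by (rule theI')
qed

lemma q_hat_sq: "q_hat\<^sup>2 < 86/100" using f_zero_sq q_hat by auto
lemma q_hat_gt: "r0 < q_hat" using q_hat f_r0 by (cases "q_hat = r0") auto
lemma q_hat_sq2: "1/2 < q_hat\<^sup>2" using sq_lt[of r0 q_hat] q_hat_gt r0_pos r0_sq by simp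

lemma f_pos_before: assumes "r0 \<le> q" "q < q_hat" shows "0 < f_aux q"
proof -
  have "1/2 \<le> q\<^sup>2" using sq_le[of r0 q] assms r0_pos r0_sq by simp
  then show ?thesis using f_strict[of q q_hat] assms q_hat q_hat_sq r0_pos by simp
qed

lemma f_neg_after: assumes "q_hat < q" "q < 1" shows "f_aux q < 0"
proof (cases "86/100 \<le> q\<^sup>2")
  case True then show ?thesis using f_neg[of q] assms q_hat_gt r0_pos by simp
next
  case False then show ?thesis using f_strict[of q_hat q] assms q_hat q_hat_sq2 q_hat_gt r0_pos by simp
qed

lemma q_star_gt: "r0 < q_star"
proof -
  have "0 < hh r0" using N1 by (simp add: r0_def)
  show ?thesis
  proof (rule ccontr)
    assume "\<not> r0 < q_star"
    then have "q_star < r0 \<or> q_star = r0" by auto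
    then show False using hh_neg[of r0] q_star r0_pos r0_r1 r1_lt1 \<open>0 < hh r0\<close> by auto
  qed
qed

lemma q_hat_lt: "q_hat < q_star"
proof (rule ccontr)
  assume "\<not> q_hat < q_star"
  then have le: "q_star \<le> q_hat" by simp
  have qs2: "q_star\<^sup>2 < 1" using q_star q_star_gt r0_pos q_sq by auto
  have "1/2 < q_star\<^sup>2" using sq_lt[of r0 q_star] q_star_gt r0_pos r0_sq by simp
  have K2: "ellK q_star = 2 * ellEc q_star" using q_star by (simp add: hh_def)
  define y where "y = q_star\<^sup>2"
  have q4: "q_star^4 = y\<^sup>2" by (simp add: y_def power2_eq_square power4_eq_xxxx)
  have "f_aux q_star = (1 - 2 * y) * ellEc q_star"
    unfolding f_aux_def K2 q4 y_def[symmetric] by (simp add: algebra_simps power2_eq_square)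
  also have "\<dots> < 0" using \<open>1/2 < q_star\<^sup>2\<close> E_pos[OF qs2] by (simp add: y_def mult_neg_pos)
  finally have "f_aux q_star < 0" .
  moreover have "0 \<le> f_aux q_star"
    using f_pos_before[of q_star] le q_star_gt q_hat by (cases "q_star = q_hat") auto
  ultimately show False by simp
qed

lemma g_r0: "g_aux r0 = 0" by (simp add: g_aux_def r0_sq)
lemma g_qs: "g_aux q_star = 0" using q_star by (simp add: g_hh)

lemma g_mono_gen:
  assumes "a < b" "0 < a" "b < 1"
    and "\<And>x. a < x \<Longrightarrow> x < b \<Longrightarrow> 0 < hh x * f_aux x"
  shows "g_aux a < g_aux b"
proof (rule DERIV_pos_imp_increasing_open[OF assms(1)])
  fix x assume x: "a < x" "x < b"
  have x': "0 < x" "x < 1" using x assms by auto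
  have "0 < 16 * hh x * f_aux x" using assms(4)[OF x] by (simp add: ac_simps)
  moreover have "0 < x * (1 - x\<^sup>2)" using x' q_sq[OF x'] by simp
  ultimately have "0 < 16 * hh x * f_aux x / (x * (1 - x\<^sup>2))" by (rule divide_pos_pos)
  then show "\<exists>y. (g_aux has_real_derivative y) (at x) \<and> 0 < y" using g_deriv[OF x'] by blast
next
  show "continuous_on {a..b} g_aux"
    using assms by (intro continuous_at_imp_continuous_on ballI g_isCont) auto
qed

lemma g_anti_gen:
  assumes "a < b" "0 < a" "b < 1"
    and "\<And>x. a < x \<Longrightarrow> x < b \<Longrightarrow> hh x * f_aux x < 0"
  shows "g_aux b < g_aux a"
proof -
  have "(\<lambda>x. - g_aux x) a < (\<lambda>x. - g_aux x) b"
  proof (rule DERIV_pos_imp_increasing_open[OF assms(1)])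
    fix x assume x: "a < x" "x < b"
    have x': "0 < x" "x < 1" using x assms by auto
    have "16 * hh x * f_aux x < 0" using assms(4)[OF x] by (simp add: ac_simps)
    moreover have "0 < x * (1 - x\<^sup>2)" using x' q_sq[OF x'] by simp
    ultimately have "16 * hh x * f_aux x / (x * (1 - x\<^sup>2)) < 0" by (rule divide_neg_pos)
    then show "\<exists>y. ((\<lambda>x. - g_aux x) has_real_derivative y) (at x) \<and> 0 < y"
      using DERIV_minus[OF g_deriv[OF x']] by force
  next
    show "continuous_on {a..b} (\<lambda>x. - g_aux x)"
      using assms by (intro continuous_at_imp_continuous_on ballI continuous_intros g_isCont) auto
  qed
  then show ?thesis by simp
qed

lemma g_inc1: "r0 \<le> a \<Longrightarrow> a < b \<Longrightarrow> b \<le> q_hat \<Longrightarrow> g_aux a < g_aux b"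
  apply (rule g_mono_gen)
  using r0_pos q_hat q_hat_lt q_star
  by (auto intro!: mult_pos_pos hh_pos f_pos_before)

lemma g_dec: "q_hat \<le> a \<Longrightarrow> a < b \<Longrightarrow> b \<le> q_star \<Longrightarrow> g_aux b < g_aux a"
  apply (rule g_anti_gen)
  using r0_pos q_hat q_hat_gt q_star
  by (auto intro!: mult_pos_neg hh_pos f_neg_after)

lemma g_inc2: "q_star \<le> a \<Longrightarrow> a < b \<Longrightarrow> b < 1 \<Longrightarrow> g_aux a < g_aux b"
  apply (rule g_mono_gen)
  using r0_pos q_hat_gt q_hat_lt q_star_gt
  by (auto intro!: mult_neg_neg hh_neg f_neg_after)



lemma lambda_hat_pos: "0 < lambda_hat"
  using g_inc1[of r0 q_hat] q_hat_gt g_r0 by (simp add: lambda_hat_def)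

lemma q1_prop: assumes c: "0 < c" "c \<le> lambda_hat"
  shows "r0 < q1 c \<and> q1 c \<le> q_hat \<and> g_aux (q1 c) = c"
proof -
  have "\<exists>x\<ge>r0. x \<le> q_hat \<and> g_aux x = c"
    by (rule IVT) (use c g_r0 q_hat_gt r0_pos q_hat in \<open>auto intro!: g_isCont simp: lambda_hat_def\<close>)
  then obtain x where x: "r0 \<le> x" "x \<le> q_hat" "g_aux x = c" by blast
  have x1: "r0 < x" using x c g_r0 by (cases "x = r0") auto
  have "\<exists>!q. r0 < q \<and> q \<le> q_hat \<and> g_aux q = c"
  proof (rule ex1I[of _ x])
    show "r0 < x \<and> x \<le> q_hat \<and> g_aux x = c" using x x1 by simp
    fix y assume y: "r0 < y \<and> y \<le> q_hat \<and> g_aux y = c"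
    show "y = x" using g_inc1[of x y] g_inc1[of y x] x x1 y by (cases x y rule: linorder_cases) auto
  qed
  then show ?thesis unfolding q1_def r0_def[symmetric] by (rule theI')
qed

lemma q2_prop: assumes c: "0 < c" "c \<le> lambda_hat"
  shows "q_hat \<le> q2 c \<and> q2 c < q_star \<and> g_aux (q2 c) = c"
proof -
  have "\<exists>x\<ge>q_hat. x \<le> q_star \<and> g_aux x = c"
    by (rule IVT2) (use c g_qs q_hat_lt r0_pos q_hat_gt q_star in \<open>auto intro!: g_isCont simp: lambda_hat_def\<close>)
  then obtain x where x: "q_hat \<le> x" "x \<le> q_star" "g_aux x = c" by blast
  have x1: "x < q_star" using x c g_qs by (cases "x = q_star") auto
  have "\<exists>!q. q_hat \<le> q \<and> q < q_star \<and> g_aux q = c"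
  proof (rule ex1I[of _ x])
    show "q_hat \<le> x \<and> x < q_star \<and> g_aux x = c" using x x1 by simp
    fix y assume y: "q_hat \<le> y \<and> y < q_star \<and> g_aux y = c"
    show "y = x" using g_dec[of x y] g_dec[of y x] x x1 y by (cases x y rule: linorder_cases) auto
  qed
  then show ?thesis unfolding q2_def by (rule theI')
qed

lemma q3_prop: assumes c: "0 < c"
  shows "q_star < q3 c \<and> q3 c < 1 \<and> g_aux (q3 c) = c"
proof -
  obtain q0 where q0: "0 < q0" "q0 < 1" "3/4 \<le> q0\<^sup>2" "pi + sqrt c + 1 \<le> ellK q0"
    using K_big[of "pi + sqrt c + 1"] by blast
  have q02: "q0\<^sup>2 < 1" using q_sq[OF q0(1,2)] .
  have hq: "sqrt c + 1 \<le> - hh q0" using E_le[OF q02] q0 by (simp add: hh_def)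
  have sc: "0 \<le> sqrt c" using c by simp
  have q0s: "q_star < q0"
  proof (rule ccontr)
    assume "\<not> q_star < q0"
    then have "q0 < q_star \<or> q0 = q_star" by auto
    then show False
    proof
      assume "q0 < q_star"
      then have "0 < hh q0" using hh_pos[of q0] q0 by simp
      then show False using hq sc by linarith
    next
      assume "q0 = q_star"
      then have "hh q0 = 0" using q_star by simp
      then show False using hq sc by linarith
    qed
  qed
  have "(sqrt c + 1)\<^sup>2 \<le> (hh q0)\<^sup>2"
  proof -
    have "(sqrt c + 1)\<^sup>2 \<le> (- hh q0)\<^sup>2" using power_mono[OF hq, of 2] sc by linarith
    then show ?thesis by simp
  qed
  moreover have "c < (sqrt c + 1)\<^sup>2"
  proof -
    have "(sqrt c + 1)\<^sup>2 = (sqrt c)\<^sup>2 + 2 * sqrt c + 1" by (simp add: power2_eq_square algebra_simps)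
    moreover have "(sqrt c)\<^sup>2 = c" using c by simp
    ultimately show ?thesis using sc by linarith
  qed
  ultimately have "c < (hh q0)\<^sup>2" by simp
  moreover have "1/2 \<le> 2 * q0\<^sup>2 - 1" using q0 by simp
  ultimately have "c \<le> 8 * (hh q0)\<^sup>2 * (2 * q0\<^sup>2 - 1)"
  proof -
    assume a1: "c < (hh q0)\<^sup>2" and a2: "1/2 \<le> 2 * q0\<^sup>2 - 1"
    have "(hh q0)\<^sup>2 * (1/2) \<le> (hh q0)\<^sup>2 * (2 * q0\<^sup>2 - 1)"
      using a2 by (intro mult_left_mono) auto
    then show ?thesis using a1 c by linarith
  qed
  then have gq0: "c \<le> g_aux q0" by (simp add: g_hh)
  have "\<exists>x\<ge>q_star. x \<le> q0 \<and> g_aux x = c"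
    by (rule IVT) (use c g_qs q0s q0 q_star_gt r0_pos gq0 in \<open>auto intro!: g_isCont\<close>)
  then obtain x where x: "q_star \<le> x" "x \<le> q0" "g_aux x = c" by blast
  have x1: "q_star < x" using x c g_qs by (cases "x = q_star") auto
  have "\<exists>!q. q_star < q \<and> q < 1 \<and> g_aux q = c"
  proof (rule ex1I[of _ x])
    show "q_star < x \<and> x < 1 \<and> g_aux x = c" using x x1 q0 by simp
    fix y assume y: "q_star < y \<and> y < 1 \<and> g_aux y = c"
    show "y = x" using g_inc2[of x y] g_inc2[of y x] x x1 y q0 by (cases x y rule: linorder_cases) auto
  qed
  then show ?thesis unfolding q3_def by (rule theI')
qed

lemma g_nz: "g_aux q = c \<Longrightarrow> c \<noteq> 0 \<Longrightarrow> 2 * ellEc q - ellK q \<noteq> 0"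
  by (auto simp: g_aux_def)

theorem lemma2p9:
  fixes lam l :: real
  assumes "lam > 0" and "l > 0"
  shows "(lam * l\<^sup>2 \<le> lambda_hat \<longrightarrow>
            sym_curve (gamma_sarc lam l) (L_sarc lam l) l \<and>
            sym_curve (gamma_larc lam l) (L_larc lam l) l)
       \<and> sym_curve (gamma_loop lam l) (L_loop lam l) l
       \<and> (\<exists>s. 0 < s \<and> s < L_loop lam l / 2 \<and>
              gamma_loop lam l s = gamma_loop lam l (L_loop lam l - s))"
proof -
  define c where "c = lam * l\<^sup>2"
  have c0: "0 < c" using assms by (simp add: c_def)
  have A: "sym_curve (gamma_sarc lam l) (L_sarc lam l) l \<and> sym_curve (gamma_larc lam l) (L_larc lam l) l"
    if cl: "c \<le> lambda_hat"
  proof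
    have p: "r0 < q1 c \<and> q1 c \<le> q_hat \<and> g_aux (q1 c) = c" by (rule q1_prop[OF c0 cl])
    have q: "(q1 c)\<^sup>2 < 1" using p q_hat r0_pos q_sq[of "q1 c"] by auto
    have h: "2 * ellEc (q1 c) - ellK (q1 c) \<noteq> 0" using p c0 g_nz by blast
    show "sym_curve (gamma_sarc lam l) (L_sarc lam l) l"
      using arc_sym[OF q assms(2) h] by (simp add: gamma_sarc_def L_sarc_def c_def Let_def)
  next
    have p: "q_hat \<le> q2 c \<and> q2 c < q_star \<and> g_aux (q2 c) = c" by (rule q2_prop[OF c0 cl])
    have q: "(q2 c)\<^sup>2 < 1" using p q_star q_hat_gt r0_pos q_sq[of "q2 c"] by auto
    have h: "2 * ellEc (q2 c) - ellK (q2 c) \<noteq> 0" using p c0 g_nz by blast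
    show "sym_curve (gamma_larc lam l) (L_larc lam l) l"
      using arc_sym[OF q assms(2) h] by (simp add: gamma_larc_def L_larc_def c_def Let_def)
  qed
  have p: "q_star < q3 c \<and> q3 c < 1 \<and> g_aux (q3 c) = c" by (rule q3_prop[OF c0])
  have q: "(q3 c)\<^sup>2 < 1" using p q_star_gt r0_pos q_sq[of "q3 c"] by auto
  have h: "2 * ellEc (q3 c) - ellK (q3 c) \<noteq> 0" using p c0 g_nz by blast
  have hK: "2 * ellEc (q3 c) < ellK (q3 c)" using hh_neg[of "q3 c"] p by (simp add: hh_def)
  have B: "sym_curve (gamma_loop lam l) (L_loop lam l) l"
    using loop_sym[OF q assms(2) h] by (simp add: gamma_loop_def L_loop_def c_def Let_def)
  have C: "\<exists>s. 0 < s \<and> s < L_loop lam l / 2 \<and> gamma_loop lam l s = gamma_loop lam l (L_loop lam l - s)"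
    using loop_self[OF q assms(2) hK] by (simp add: gamma_loop_def L_loop_def c_def Let_def)
  show ?thesis using A B C by (simp add: c_def)
qed

end
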